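(* Let $M$ be a compact Kähler manifold of complex dimension $3$ with trivial canonical bundle. Suppose $H_2(M,\mathbb{Z})$ is torsion-free with basis $e_1,\dots,e_r$, and let $e^1,\dots,e^r\in H^2(M,\mathbb{Z})$ be the dual basis. Let $P$ be the set of nonzero classes $\eta=\sum_j a^je_j$ with all $a^j\ge0$. Let $\mathcal{R}=\mathbb{Q}[[q_1,\dots,q_r]]$, put $q^\eta=\prod_j q_j^{a^j}$, and fix rational numbers $(N_\eta)_{\eta\in P}$. Define the $\mathcal{R}$-bilinear product $\star$ on $H^{ev}(M,\mathbb{Q})\otimes\mathcal{R}$ on homogeneous classes by $\zeta_1\star\zeta_2=\zeta_1\cup\zeta_2$, unless $\zeta_1,\zeta_2\in H^2(M,\mathbb{Q})$, in which case \[\zeta_1\star\zeta_2=\zeta_1\cup\zeta_2+\sum_{\eta\in P}\zeta_1(\eta)\zeta_2(\eta)N_\eta\frac{q^\eta}{1-q^\eta}\eta^\vee .\] For $j=1,\dots,r$, let $\delta_j=2\pi i\,q_j\,\partial/\partial q_j$, acting on $H^{ev}(M,\mathbb{C})\otimes\mathcal{R}$ through the coefficients. Define operators $D_j=\delta_j+(e^j\star\,\cdot\,)$ on $H^{ev}(M,\mathbb{C})\otimes\mathcal{R}$. Then $D_jD_k=D_kD_j$ for all $j,k$. Equivalently, the formal connection $\nabla=d+\sum_j dt_j\otimes(e^j\star\cdot)$, where $q_j=e^{2\pi i t_j}$, is flat.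
   Context: $\frac{q^\eta}{1-q^\eta}$ denotes the formal series $\sum_{m\ge1}q^{m\eta}$. $\eta^\vee\in H^4(M,\mathbb{Q})$ is the Poincaré dual of $\eta$, characterized by $\int_M\eta^\vee\cup\zeta=\zeta(\eta)$ for $\zeta\in H^2$. Here $\zeta(\eta)$ is the pairing of cohomology with homology. *)

theory Defs
  imports "HOL-Analysis.Analysis"
begin

text \<open>
Coordinate model of the even cohomology of the Calabi--Yau threefold M with coefficients
in the ring of formal power series in q_1,...,q_r.  The index type 'r (finite) indexes the
basis e_1,...,e_r of H_2(M,Z); r = CARD('r).

Formal power series: a monomial q^a is an exponent vector a :: 'r => nat; a series is its
coefficient function.

H^ev(M,C) has the basis
  1 (in H^0),  e^1..e^r (in H^2, dual to e_1..e_r),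
  e_1^v..e_r^v (in H^4, Poincare duals of e_1..e_r, so int e^i cup e_j^v = delta_ij),
  pt (in H^6, int pt = 1).
The cup product is then determined by the triple intersection numbers
  c i j l = int_M e^i cup e^j cup e^l :
  e^i cup e^j = sum_l c i j l e_l^v,  e^i cup e_l^v = delta_il pt.
\<close>

type_synonym 'r mon = "'r \<Rightarrow> nat"
type_synonym 'r ser = "'r mon \<Rightarrow> complex"

definition ser_zero :: "'r ser" where "ser_zero = (\<lambda>b. 0)"
definition ser_one :: "'r ser" where "ser_one = (\<lambda>b. if b = (\<lambda>_. 0) then 1 else 0)"
definition ser_add :: "'r ser \<Rightarrow> 'r ser \<Rightarrow> 'r ser" where
  "ser_add f g = (\<lambda>b. f b + g b)"
definition ser_scale :: "complex \<Rightarrow> 'r ser \<Rightarrow> 'r ser" where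
  "ser_scale z f = (\<lambda>b. z * f b)"
definition ser_mult :: "'r::finite ser \<Rightarrow> 'r ser \<Rightarrow> 'r ser" where
  "ser_mult f g = (\<lambda>b. \<Sum>a\<in>{a. \<forall>i. a i \<le> b i}. f a * g (\<lambda>i. b i - a i))"

text \<open>The series q^eta/(1-q^eta) = sum_{m>=1} q^(m eta).\<close>
definition geom :: "'r mon \<Rightarrow> 'r ser" where
  "geom \<eta> = (\<lambda>b. if \<exists>m::nat. m \<ge> 1 \<and> b = (\<lambda>i. m * \<eta> i) then 1 else 0)"

text \<open>delta_j = 2 pi i q_j d/dq_j acting on coefficients.\<close>
definition ser_delta :: "'r \<Rightarrow> 'r ser \<Rightarrow> 'r ser" where
  "ser_delta j f = (\<lambda>b. 2 * of_real pi * \<i> * of_nat (b j) * f b)"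

record 'r hev =
  h0 :: "'r ser"
  h2 :: "'r \<Rightarrow> 'r ser"
  h4 :: "'r \<Rightarrow> 'r ser"
  h6 :: "'r ser"

definition hev_add :: "'r hev \<Rightarrow> 'r hev \<Rightarrow> 'r hev" where
  "hev_add x y = \<lparr>h0 = ser_add (h0 x) (h0 y),
                  h2 = (\<lambda>i. ser_add (h2 x i) (h2 y i)),
                  h4 = (\<lambda>i. ser_add (h4 x i) (h4 y i)),
                  h6 = ser_add (h6 x) (h6 y)\<rparr>"

definition hev_delta :: "'r \<Rightarrow> 'r hev \<Rightarrow> 'r hev" where
  "hev_delta j x = \<lparr>h0 = ser_delta j (h0 x),
                    h2 = (\<lambda>i. ser_delta j (h2 x i)),
                    h4 = (\<lambda>i. ser_delta j (h4 x i)),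
                    h6 = ser_delta j (h6 x)\<rparr>"

definition ecls :: "'r \<Rightarrow> 'r hev" where
  "ecls j = \<lparr>h0 = ser_zero, h2 = (\<lambda>i. if i = j then ser_one else ser_zero),
             h4 = (\<lambda>_. ser_zero), h6 = ser_zero\<rparr>"

definition cup :: "('r::finite \<Rightarrow> 'r \<Rightarrow> 'r \<Rightarrow> int) \<Rightarrow> 'r hev \<Rightarrow> 'r hev \<Rightarrow> 'r hev" where
  "cup c x y = \<lparr>
     h0 = ser_mult (h0 x) (h0 y),
     h2 = (\<lambda>i. ser_add (ser_mult (h0 x) (h2 y i)) (ser_mult (h2 x i) (h0 y))),
     h4 = (\<lambda>l. ser_add (ser_add (ser_mult (h0 x) (h4 y l)) (ser_mult (h4 x l) (h0 y)))
              (\<lambda>b. \<Sum>i\<in>UNIV. \<Sum>j\<in>UNIV. of_int (c i j l) * ser_mult (h2 x i) (h2 y j) b)),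
     h6 = ser_add (ser_add (ser_mult (h0 x) (h6 y)) (ser_mult (h6 x) (h0 y)))
              (\<lambda>b. \<Sum>i\<in>UNIV. ser_mult (h2 x i) (h4 y i) b + ser_mult (h4 x i) (h2 y i) b)\<rparr>"

definition pair2 :: "'r::finite hev \<Rightarrow> 'r mon \<Rightarrow> 'r ser" where
  "pair2 x \<eta> = (\<lambda>b. \<Sum>i\<in>UNIV. of_nat (\<eta> i) * h2 x i b)"

definition Pset :: "'r mon set" where
  "Pset = {\<eta>. \<eta> \<noteq> (\<lambda>_. 0)}"

text \<open>Quantum correction: sum over eta in P of zeta1(eta) zeta2(eta) N_eta q^eta/(1-q^eta) eta^v,
  where eta^v = sum_l eta_l e_l^v.  The formal infinite sum is taken coefficientwise.\<close>
definition qcorr :: "('r::finite mon \<Rightarrow> rat) \<Rightarrow> 'r hev \<Rightarrow> 'r hev \<Rightarrow> 'r hev" where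
  "qcorr N x y = \<lparr>h0 = ser_zero, h2 = (\<lambda>_. ser_zero),
     h4 = (\<lambda>l b. \<Sum>\<^sub>\<infinity>\<eta>\<in>Pset. of_nat (\<eta> l) * of_rat (N \<eta>) *
                     ser_mult (ser_mult (pair2 x \<eta>) (pair2 y \<eta>)) (geom \<eta>) b),
     h6 = ser_zero\<rparr>"

definition qstar :: "('r::finite \<Rightarrow> 'r \<Rightarrow> 'r \<Rightarrow> int) \<Rightarrow> ('r mon \<Rightarrow> rat) \<Rightarrow> 'r hev \<Rightarrow> 'r hev \<Rightarrow> 'r hev" where
  "qstar c N x y = hev_add (cup c x y) (qcorr N x y)"

definition Dop :: "('r::finite \<Rightarrow> 'r \<Rightarrow> 'r \<Rightarrow> int) \<Rightarrow> ('r mon \<Rightarrow> rat) \<Rightarrow> 'r \<Rightarrow> 'r hev \<Rightarrow> 'r hev" where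
  "Dop c N j x = hev_add (hev_delta j x) (qstar c N (ecls j) x)"

end

theory Submission
  imports Defs
begin

definition Fb :: "'r mon \<Rightarrow> 'r mon set" where
  "Fb b = {\<eta>. \<eta> \<noteq> (\<lambda>_. 0) \<and> (\<forall>i. \<eta> i \<le> b i)}"

lemma finite_le: "finite {a::'r::finite mon. \<forall>i. a i \<le> b i}"
proof -
  have "{a::'r mon. \<forall>i. a i \<le> b i} = Pi\<^sub>E UNIV (\<lambda>i. {..b i})"
    by (auto simp: PiE_UNIV_domain Pi_def)
  moreover have "finite (Pi\<^sub>E (UNIV::'r set) (\<lambda>i. {..b i}))"
    by (rule finite_PiE) auto
  ultimately show ?thesis by simp
qed

lemma finite_Fb: "finite (Fb (b::'r::finite mon))"
  unfolding Fb_def by (rule finite_subset[OF _ finite_le[of b]]) auto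

lemma geom_supp:
  assumes "\<eta> \<noteq> (\<lambda>_. 0)" "geom \<eta> (\<lambda>i. b i - a i) \<noteq> 0" "\<forall>i. a i \<le> b i"
  shows "\<forall>i. \<eta> i \<le> b i"
proof
  fix i
  from assms(2) obtain m :: nat where m: "m \<ge> 1" "(\<lambda>i. b i - a i) = (\<lambda>i. m * \<eta> i)"
    unfolding geom_def by (auto split: if_splits)
  have "b i - a i = m * \<eta> i" using m(2) by metis
  moreover have "1 * \<eta> i \<le> m * \<eta> i" using m(1) by (rule mult_le_mono1)
  moreover have "b i - a i \<le> b i" by simp
  ultimately show "\<eta> i \<le> b i" by linarith
qed

lemma mult_geom_zero:
  assumes "\<eta> \<noteq> (\<lambda>_. 0)" "\<not> (\<forall>i. \<eta> i \<le> b i)"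
  shows "ser_mult f (geom \<eta>) b = 0"
  unfolding ser_mult_def
  by (rule sum.neutral) (metis (mono_tags) assms geom_supp mem_Collect_eq mult_eq_0_iff)

lemma qsum:
  fixes g :: "'r::finite mon \<Rightarrow> complex"
  shows "(\<Sum>\<^sub>\<infinity>\<eta>\<in>Pset. g \<eta> * ser_mult (f \<eta>) (geom \<eta>) b)
       = (\<Sum>\<eta>\<in>Fb b. g \<eta> * ser_mult (f \<eta>) (geom \<eta>) b)"
proof -
  have "(\<Sum>\<^sub>\<infinity>\<eta>\<in>Pset. g \<eta> * ser_mult (f \<eta>) (geom \<eta>) b)
       = (\<Sum>\<^sub>\<infinity>\<eta>\<in>Fb b. g \<eta> * ser_mult (f \<eta>) (geom \<eta>) b)"
  proof (rule infsum_cong_neutral)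
    fix x assume "x \<in> Pset - Fb b"
    then have "x \<noteq> (\<lambda>_. 0)" "\<not> (\<forall>i. x i \<le> b i)" by (auto simp: Pset_def Fb_def)
    then show "g x * ser_mult (f x) (geom x) b = 0" using mult_geom_zero[of x b "f x"] by simp
  qed (auto simp: Pset_def Fb_def)
  also have "\<dots> = (\<Sum>\<eta>\<in>Fb b. g \<eta> * ser_mult (f \<eta>) (geom \<eta>) b)"
    by (rule infsum_finite[OF finite_Fb])
  finally show ?thesis .
qed

lemma delta_mult:
  "ser_delta j (ser_mult f g) b = ser_mult (ser_delta j f) g b + ser_mult f (ser_delta j g) b"
  unfolding ser_delta_def ser_mult_def sum_distrib_left sum.distrib[symmetric]
proof (rule sum.cong)
  fix x assume "x \<in> {a. \<forall>i. a i \<le> b i}"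
  then have "x j \<le> b j" by simp
  then have "(of_nat (b j) :: complex) = of_nat (x j) + of_nat (b j - x j)"
    by (simp add: of_nat_diff)
  then show "2 * complex_of_real pi * \<i> * of_nat (b j) * (f x * g (\<lambda>i. b i - x i)) =
         2 * complex_of_real pi * \<i> * of_nat (x j) * f x * g (\<lambda>i. b i - x i) +
         f x * (2 * complex_of_real pi * \<i> * of_nat ((\<lambda>i. b i - x i) j) * g (\<lambda>i. b i - x i))"
    by (simp add: algebra_simps)
qed simp

lemma delta_geom:
  "of_nat (\<eta> k) * ser_delta j (geom \<eta>) b = of_nat (\<eta> j) * ser_delta k (geom \<eta>) b"
  unfolding ser_delta_def geom_def by auto

lemma mult_delta_geom:
  "of_nat (\<eta> k) * ser_mult f (ser_delta j (geom \<eta>)) b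
   = of_nat (\<eta> j) * ser_mult f (ser_delta k (geom \<eta>)) b"
proof -
  have "\<And>c. of_nat (\<eta> k) * ser_delta j (geom \<eta>) c = of_nat (\<eta> j) * ser_delta k (geom \<eta>) c"
    by (rule delta_geom)
  then have "\<And>c a. f a * (of_nat (\<eta> k) * ser_delta j (geom \<eta>) c)
      = f a * (of_nat (\<eta> j) * ser_delta k (geom \<eta>) c)" by simp
  then show ?thesis unfolding ser_mult_def sum_distrib_left
    by (intro sum.cong) (auto simp: algebra_simps)
qed

lemma mult_zero_l[simp]: "ser_mult ser_zero f = ser_zero"
  unfolding ser_mult_def ser_zero_def by simp
lemma mult_zero_r[simp]: "ser_mult f ser_zero = ser_zero"
  unfolding ser_mult_def ser_zero_def by simp
lemma mult_one_l[simp]: "ser_mult ser_one f = (f :: 'r::finite ser)"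
proof
  fix b :: "'r mon"
  have "ser_mult ser_one f b = (\<Sum>a\<in>{a. \<forall>i. a i \<le> b i}. if a = (\<lambda>_. 0) then f (\<lambda>i. b i - a i) else 0)"
    unfolding ser_mult_def ser_one_def by (intro sum.cong) auto
  also have "\<dots> = f (\<lambda>i. b i - 0)"
    using finite_le[of b] by (simp add: sum.delta)
  finally show "ser_mult ser_one f b = f b" by simp
qed
lemma mult_scale_l: "ser_mult (\<lambda>b. z * f b) g = (\<lambda>b. z * ser_mult f g b)"
  unfolding ser_mult_def by (simp add: sum_distrib_left algebra_simps)
lemma mult_if: "ser_mult (if P then f else g) h = (if P then ser_mult f h else ser_mult g h)"
  by simp
lemma add_zero_l[simp]: "ser_add ser_zero f = f" unfolding ser_add_def ser_zero_def by simp
lemma add_zero_r[simp]: "ser_add f ser_zero = f" unfolding ser_add_def ser_zero_def by simp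

lemma zero_app[simp]: "ser_zero b = 0" by (simp add: ser_zero_def)
lemma mult_one_app[simp]: "ser_mult ser_one f b = (f :: 'r::finite ser) b" by simp
lemma mult_zero_app[simp]: "ser_mult ser_zero f b = 0" by (simp add: ser_mult_def)
lemma sum_if_c: "(\<Sum>x\<in>A. if P then f x else 0) = (if P then sum f A else 0)" by simp
lemma if_app: "(if P then f else g) x = (if P then f x else g x)" by simp
lemma mult_if0: "(x::complex) * (if P then a else 0) = (if P then x*a else 0)" by simp
lemma if0_mult: "(if P then a else 0) * (x::complex) = (if P then a*x else 0)" by simp

lemma pair2_ecls: "pair2 (ecls j) \<eta> = (\<lambda>b. of_nat (\<eta> j) * ser_one b)"
  unfolding pair2_def ecls_def by (auto simp: if_app mult_if0 sum.delta cong: if_cong)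

definition Q :: "('r::finite mon \<Rightarrow> rat) \<Rightarrow> 'r \<Rightarrow> 'r \<Rightarrow> 'r hev \<Rightarrow> 'r ser" where
  "Q N j l y b = (\<Sum>\<eta>\<in>Fb b. (of_nat (\<eta> l) * of_rat (N \<eta>) * of_nat (\<eta> j)) * ser_mult (pair2 y \<eta>) (geom \<eta>) b)"

lemma qcorr_h4: "h4 (qcorr N (ecls j) y) l = Q N j l y"
proof
  fix b
  have "h4 (qcorr N (ecls j) y) l b = (\<Sum>\<^sub>\<infinity>\<eta>\<in>Pset. (of_nat (\<eta> l) * of_rat (N \<eta>) * of_nat (\<eta> j)) * ser_mult (pair2 y \<eta>) (geom \<eta>) b)"
    unfolding qcorr_def pair2_ecls mult_scale_l by (simp add: algebra_simps)
  also have "\<dots> = Q N j l y b" unfolding Q_def by (rule qsum)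
  finally show "h4 (qcorr N (ecls j) y) l b = Q N j l y b" .
qed

lemma Dop_eq: "Dop c N j y = \<lparr>h0 = ser_delta j (h0 y),
   h2 = (\<lambda>i b. ser_delta j (h2 y i) b + (if i = j then h0 y b else 0)),
   h4 = (\<lambda>l b. ser_delta j (h4 y l) b + (\<Sum>m\<in>UNIV. of_int (c j m l) * h2 y m b) + Q N j l y b),
   h6 = (\<lambda>b. ser_delta j (h6 y) b + h4 y j b)\<rparr>"
proof -
  have q: "qcorr N (ecls j) y = \<lparr>h0 = ser_zero, h2 = (\<lambda>_. ser_zero), h4 = (\<lambda>l. Q N j l y), h6 = ser_zero\<rparr>"
    using qcorr_h4[of N j y] unfolding qcorr_def by auto
  show ?thesis
    unfolding Dop_def qstar_def q
    unfolding hev_add_def hev_delta_def cup_def ecls_def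
    apply (simp add: mult_if)
    apply (auto simp: ser_add_def if_app mult_if0 if0_mult sum_if_c sum.delta add.assoc cong: if_cong)
    done
qed

lemma delta_comm: "ser_delta j (ser_delta k f) = ser_delta k (ser_delta j f)"
  unfolding ser_delta_def by (simp add: algebra_simps)
lemma delta_add: "ser_delta j (\<lambda>b. f b + g b) b = ser_delta j f b + ser_delta j g b"
  unfolding ser_delta_def by (simp add: algebra_simps)
lemma delta_sum: "ser_delta j (\<lambda>b. \<Sum>m\<in>A. a m * f m b) b = (\<Sum>m\<in>A. a m * ser_delta j (f m) b)"
  unfolding ser_delta_def by (simp add: sum_distrib_left algebra_simps)
lemma mult_add_l: "ser_mult (\<lambda>b. f b + g b) h b = ser_mult f h b + ser_mult g h b"
  unfolding ser_mult_def by (simp add: sum.distrib algebra_simps)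

lemma pair2_D: "pair2 (Dop c N k x) \<eta> = (\<lambda>b. ser_delta k (pair2 x \<eta>) b + of_nat (\<eta> k) * h0 x b)"
  unfolding Dop_eq pair2_def
  by (auto simp: delta_sum distrib_left sum.distrib mult_if0 sum.delta)

abbreviation Aterm where
  "Aterm j x \<eta> b \<equiv> ser_mult (ser_delta j (pair2 x \<eta>)) (geom \<eta>) b"
abbreviation Bterm where
  "Bterm j x \<eta> b \<equiv> ser_mult (pair2 x \<eta>) (ser_delta j (geom \<eta>)) b"

lemma delta_Q: "ser_delta j (Q N k l x) b = (\<Sum>\<eta>\<in>Fb b. (of_nat (\<eta> l) * of_rat (N \<eta>) * of_nat (\<eta> k)) *
    (Aterm j x \<eta> b + Bterm j x \<eta> b))"
proof -
  have "ser_delta j (Q N k l x) b = (\<Sum>\<eta>\<in>Fb b. (of_nat (\<eta> l) * of_rat (N \<eta>) * of_nat (\<eta> k)) *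
    ser_delta j (ser_mult (pair2 x \<eta>) (geom \<eta>)) b)"
    unfolding Q_def ser_delta_def by (simp add: sum_distrib_left algebra_simps)
  then show ?thesis by (simp add: delta_mult)
qed

lemma Q_D: "Q N j l (Dop c N k x) b = (\<Sum>\<eta>\<in>Fb b. (of_nat (\<eta> l) * of_rat (N \<eta>) * of_nat (\<eta> j)) *
    (Aterm k x \<eta> b + of_nat (\<eta> k) * ser_mult (h0 x) (geom \<eta>) b))"
  unfolding Q_def pair2_D mult_add_l
  by (simp add: mult_scale_l)

lemma Q_sym: "Q N k j x b = Q N j k x b"
  unfolding Q_def by (simp add: algebra_simps)

lemma W_sym:
  "ser_delta j (Q N k l x) b + Q N j l (Dop c N k x) b = ser_delta k (Q N j l x) b + Q N k l (Dop c N j x) b"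
  unfolding delta_Q Q_D sum.distrib[symmetric]
proof (rule sum.cong)
  fix \<eta> assume "\<eta> \<in> Fb b"
  have g: "of_nat (\<eta> k) * Bterm j x \<eta> b = of_nat (\<eta> j) * Bterm k x \<eta> b"
    by (rule mult_delta_geom)
  show "of_nat (\<eta> l) * of_rat (N \<eta>) * of_nat (\<eta> k) * (Aterm j x \<eta> b + Bterm j x \<eta> b) +
         of_nat (\<eta> l) * of_rat (N \<eta>) * of_nat (\<eta> j) * (Aterm k x \<eta> b + of_nat (\<eta> k) * ser_mult (h0 x) (geom \<eta>) b) =
         of_nat (\<eta> l) * of_rat (N \<eta>) * of_nat (\<eta> j) * (Aterm k x \<eta> b + Bterm k x \<eta> b) +
         of_nat (\<eta> l) * of_rat (N \<eta>) * of_nat (\<eta> k) * (Aterm j x \<eta> b + of_nat (\<eta> j) * ser_mult (h0 x) (geom \<eta>) b)"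
    using g by (simp add: algebra_simps)
qed simp

lemma h4_D: "h4 (Dop c N j y) l = (\<lambda>b. ser_delta j (h4 y l) b + (\<Sum>m\<in>UNIV. of_int (c j m l) * h2 y m b) + Q N j l y b)"
  by (simp add: Dop_eq)
lemma h2_D: "h2 (Dop c N j y) i = (\<lambda>b. ser_delta j (h2 y i) b + (if i = j then h0 y b else 0))"
  by (simp add: Dop_eq)

lemma h4_DD: "h4 (Dop c N j (Dop c N k x)) l b =
   ser_delta j (ser_delta k (h4 x l)) b + (\<Sum>m\<in>UNIV. of_int (c k m l) * ser_delta j (h2 x m) b)
   + (\<Sum>m\<in>UNIV. of_int (c j m l) * ser_delta k (h2 x m) b) + of_int (c j k l) * h0 x b
   + (ser_delta j (Q N k l x) b + Q N j l (Dop c N k x) b)"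
proof -
  have "h4 (Dop c N j (Dop c N k x)) l b =
     ser_delta j (h4 (Dop c N k x) l) b + (\<Sum>m\<in>UNIV. of_int (c j m l) * h2 (Dop c N k x) m b)
     + Q N j l (Dop c N k x) b"
    by (simp only: h4_D)
  also have "ser_delta j (h4 (Dop c N k x) l) b = ser_delta j (ser_delta k (h4 x l)) b
     + (\<Sum>m\<in>UNIV. of_int (c k m l) * ser_delta j (h2 x m) b) + ser_delta j (Q N k l x) b"
    unfolding h4_D delta_add delta_sum by simp
  also have "(\<Sum>m\<in>UNIV. of_int (c j m l) * h2 (Dop c N k x) m b) =
     (\<Sum>m\<in>UNIV. of_int (c j m l) * ser_delta k (h2 x m) b) + of_int (c j k l) * h0 x b"
    unfolding h2_D by (simp add: distrib_left sum.distrib mult_if0 sum.delta cong: if_cong)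
  finally show ?thesis by (simp add: algebra_simps)
qed

theorem mainTheorem4:
  fixes c :: "'r::finite \<Rightarrow> 'r \<Rightarrow> 'r \<Rightarrow> int"
    and N :: "'r mon \<Rightarrow> rat"
    and j k :: 'r
  assumes "\<And>i1 i2 i3. c i1 i2 i3 = c i2 i1 i3"
      and "\<And>i1 i2 i3. c i1 i2 i3 = c i1 i3 i2"
  shows "Dop c N j (Dop c N k x) = Dop c N k (Dop c N j x)"
proof (rule hev.equality)
  show "h0 (Dop c N j (Dop c N k x)) = h0 (Dop c N k (Dop c N j x))"
    by (simp add: Dop_eq delta_comm)
  show "h2 (Dop c N j (Dop c N k x)) = h2 (Dop c N k (Dop c N j x))"
    by (intro ext) (auto simp add: Dop_eq ser_delta_def mult_if0 if0_mult algebra_simps cong: if_cong)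
  show "h6 (Dop c N j (Dop c N k x)) = h6 (Dop c N k (Dop c N j x))"
  proof
    fix b
    have s: "(\<Sum>m\<in>UNIV. of_int (c k m j) * h2 x m b) = (\<Sum>m\<in>UNIV. of_int (c j m k) * h2 x m b)"
      by (metis assms)
    show "h6 (Dop c N j (Dop c N k x)) b = h6 (Dop c N k (Dop c N j x)) b"
      using s Q_sym[of N k j x b]
      by (simp add: Dop_eq delta_add delta_comm algebra_simps)
  qed
  show "h4 (Dop c N j (Dop c N k x)) = h4 (Dop c N k (Dop c N j x))"
  proof (rule ext, rule ext)
    fix l b
    have s: "of_int (c j k l) = (of_int (c k j l) :: complex)"
      by (metis assms)
    show "h4 (Dop c N j (Dop c N k x)) l b = h4 (Dop c N k (Dop c N j x)) l b"
      unfolding h4_DD using s W_sym[of j N k l x b c] delta_comm[of j k]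
      by (simp add: algebra_simps)
  qed
qed simp

end
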